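(* Let $f:[0,\infty)\to[0,\infty)$ be such that there exists $C\ge1$ with $f(s)\le Cf(t)$ and $f(t)\frac{s}{t}\le C(f(s)+1)$ for all $t>s\ge0$. Then there exists $A\ge1$ such that for every $x\in(0,\infty)$, $A^{-1}F(x)-A\le f(x)\le F(x)$, where $F$ is the least concave majorant of $f$.
   Context: The least concave majorant $F$ of $f$ is the smallest concave function $F$ on $[0,\infty)$ with $f\le F$. *)

theory Defs
  imports "HOL-Analysis.Analysis"
begin

text \<open>The least concave majorant of f on [0,\<infinity>): the pointwise infimum of all
  concave functions on [0,\<infinity>) dominating f there (this infimum is itself concave,
  hence it is the smallest concave majorant).\<close>
definition least_concave_majorant :: "(real \<Rightarrow> real) \<Rightarrow> real \<Rightarrow> real" where
  "least_concave_majorant f x =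
     Inf {g x | g. concave_on {0..} g \<and> (\<forall>y\<ge>0. f y \<le> g y)}"

end

theory Submission
  imports Defs
begin

lemma affine_concave:
  fixes K c :: real
  shows "concave_on {0..} (\<lambda>y. K + c * y)"
  unfolding concave_on_iff
proof (intro conjI ballI allI impI)
  show "convex {0::real..}" by (simp add: convex_real_interval)
next
  fix a b u v :: real assume "u + v = 1"
  have e: "u * (K + c * a) + v * (K + c * b) = K * (u + v) + c * (u * a + v * b)"
    by (simp add: algebra_simps)
  show "u * (K + c * a) + v * (K + c * b) \<le> K + c * (u *\<^sub>R a + v *\<^sub>R b)"
    using e \<open>u + v = 1\<close> by simp
qed

theorem proposition2p23:
  fixes f :: "real \<Rightarrow> real" and C :: real
  assumes nonneg: "\<And>x. x \<ge> 0 \<Longrightarrow> f x \<ge> 0"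
    and C: "C \<ge> 1"
    and h1: "\<And>s t. 0 \<le> s \<Longrightarrow> s < t \<Longrightarrow> f s \<le> C * f t"
    and h2: "\<And>s t. 0 \<le> s \<Longrightarrow> s < t \<Longrightarrow> f t * (s / t) \<le> C * (f s + 1)"
  shows "\<exists>A\<ge>1. \<forall>x>0.
           least_concave_majorant f x / A - A \<le> f x \<and> f x \<le> least_concave_majorant f x"
proof (intro exI[of _ "2*C"] conjI allI impI)
  show "1 \<le> 2 * C" using C by simp
  fix x :: real assume x: "x > 0"
  define K where "K = C * (f x + 1)"
  define g where "g = (\<lambda>y. K + (K / x) * y)"
  have fx: "f x \<ge> 0" using nonneg x by simp
  have maj: "\<forall>y\<ge>0. f y \<le> g y"
  proof (intro allI impI)
    fix y :: real assume y: "y \<ge> 0"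
    have Kpos: "K \<ge> 0" unfolding K_def using C fx by simp
    have gy: "g y \<ge> K" unfolding g_def using Kpos x y by simp
    consider "y < x" | "y = x" | "y > x" by linarith
    then show "f y \<le> g y"
    proof cases
      case 1
      then have "f y \<le> C * f x" using h1 y by simp
      also have "\<dots> \<le> K" unfolding K_def using C by simp
      finally show ?thesis using gy by simp
    next
      case 2
      have "f x \<le> C * f x" using C fx by (simp add: mult_le_cancel_right1)
      also have "\<dots> \<le> K" unfolding K_def using C by simp
      finally show ?thesis using gy 2 by simp
    next
      case 3
      have "f y * (x / y) \<le> K" using h2[of x y] 3 x unfolding K_def by simp
      then have "f y \<le> K * y / x" using 3 x by (simp add: field_simps)
      also have "\<dots> \<le> g y" unfolding g_def using Kpos by simp
      finally show ?thesis .
    qed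
  qed
  have conc: "concave_on {0..} g" unfolding g_def by (rule affine_concave)
  let ?S = "{h x | h. concave_on {0..} h \<and> (\<forall>y\<ge>0. f y \<le> h y)}"
  have gin: "g x \<in> ?S" using conc maj by blast
  have lb: "\<And>z. z \<in> ?S \<Longrightarrow> f x \<le> z" using x by auto
  have bdd: "bdd_below ?S" unfolding bdd_below_def using lb by blast
  have F1: "f x \<le> least_concave_majorant f x"
    unfolding least_concave_majorant_def
    using gin lb by (intro cInf_greatest) auto
  have F2: "least_concave_majorant f x \<le> g x"
    unfolding least_concave_majorant_def using gin bdd by (rule cInf_lower)
  have gx: "g x = 2 * C * (f x + 1)" unfolding g_def K_def using x by simp
  have "least_concave_majorant f x / (2*C) \<le> f x + 1"
    using F2 gx C by (simp add: divide_le_eq mult.commute)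
  then show "least_concave_majorant f x / (2*C) - 2*C \<le> f x" using C by linarith
  show "f x \<le> least_concave_majorant f x" by (rule F1)
qed

end
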